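(* Suppose there exist $R>r>0$ such that $g(x)\le\min\{Rx+g(x^* )-Rx^*,\ rx+g(x^* )-rx^*\}$ for all $x\in[0,1]$. Then for every $c\ge1/(R-r)$, $$\lambda g(x^* )-\sup_{\mathbf x\in[0,1]^c}\mathcal R(\mathbf x)\ \ge\ \lambda\min\{1,r/2\}\,x^*\sqrt{(R-r)/c}.$$
   Context: Setting. Fix $c\in\mathbb N$ (number of identical units of a single reusable resource), an arrival rate $\lambda>0$ and a mean usage duration $d>0$, with $x^*:=c/(\lambda d)\in(0,1)$. Let $g:[0,1]\to\mathbb R$ be concave, non-decreasing, with $g(0)=0$ (the reward function). A stock-dependent policy is a vector $\mathbf x=(x_1,\dots,x_c)\in[0,1]^c$, where $x_j$ is the admission probability used when exactly $j$ units are available (the admission probability is $0$ when no unit is available). Its steady-state distribution is the unique probability vector $\pi=(\pi_0,\dots,\pi_c)$ satisfying $\pi_j\lambda x_j=\pi_{j-1}(c-j+1)/d$ for all $j\in\{1,\dots,c\}$, and its long-run average reward is $\mathcal R(\mathbf x)=\sum_{j=1}^c\pi_j\lambda g(x_j)$. *)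

theory Defs
  imports "HOL-Analysis.Analysis"
begin

text \<open>Steady-state (balance) conditions for a stock-dependent policy x
  (x j = admission probability when j units are available, j = 1..c).
  p is a probability vector on {0..c} (extended by 0 beyond c).\<close>
definition steady_state ::
  "nat \<Rightarrow> real \<Rightarrow> real \<Rightarrow> (nat \<Rightarrow> real) \<Rightarrow> (nat \<Rightarrow> real) \<Rightarrow> bool" where
  "steady_state c lam d x p \<longleftrightarrow>
     (\<forall>j\<le>c. 0 \<le> p j) \<and> (\<forall>j>c. p j = 0) \<and> (\<Sum>j\<le>c. p j) = 1 \<and>
     (\<forall>j\<in>{1..c}. p j * lam * x j = p (j - 1) * real (c - j + 1) / d)"

definition stat_dist ::
  "nat \<Rightarrow> real \<Rightarrow> real \<Rightarrow> (nat \<Rightarrow> real) \<Rightarrow> (nat \<Rightarrow> real)" where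
  "stat_dist c lam d x = (THE p. steady_state c lam d x p)"

definition avg_reward ::
  "nat \<Rightarrow> real \<Rightarrow> real \<Rightarrow> (real \<Rightarrow> real) \<Rightarrow> (nat \<Rightarrow> real) \<Rightarrow> real" where
  "avg_reward c lam d g x = (\<Sum>j=1..c. stat_dist c lam d x j * lam * g (x j))"

text \<open>Policies: [0,1]^c, coordinates indexed by 1..c (other coordinates irrelevant).\<close>
definition policies :: "nat \<Rightarrow> (nat \<Rightarrow> real) set" where
  "policies c = {x. \<forall>j\<in>{1..c}. 0 \<le> x j \<and> x j \<le> 1}"

end

theory Submission
  imports Defs
begin


primrec wseq :: "nat \<Rightarrow> real \<Rightarrow> real \<Rightarrow> (nat \<Rightarrow> real) \<Rightarrow> nat \<Rightarrow> real" where
  "wseq c lam d x 0 = 1"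
| "wseq c lam d x (Suc j) = (if x (Suc j) = 0 then 1
      else wseq c lam d x j * real (c - j) / (d * lam * x (Suc j)))"

definition k0 :: "nat \<Rightarrow> (nat \<Rightarrow> real) \<Rightarrow> nat" where
  "k0 c x = Max (insert 0 {j\<in>{1..c}. x j = 0})"

lemma k0_props:
  shows "k0 c x \<le> c" and "k0 c x = 0 \<or> x (k0 c x) = 0"
    and "\<And>j. k0 c x < j \<Longrightarrow> j \<le> c \<Longrightarrow> x j \<noteq> 0"
proof -
  have fin: "finite (insert 0 {j\<in>{1..c}. x j = 0})" by simp
  show "k0 c x \<le> c" unfolding k0_def using fin by (auto intro!: Max.boundedI)
  have "k0 c x \<in> insert 0 {j\<in>{1..c}. x j = 0}" unfolding k0_def
    using fin Max_in by blast
  then show "k0 c x = 0 \<or> x (k0 c x) = 0" by auto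
  fix j assume "k0 c x < j" "j \<le> c"
  show "x j \<noteq> 0"
  proof
    assume "x j = 0"
    then have "j \<in> insert 0 {j\<in>{1..c}. x j = 0}" using \<open>k0 c x < j\<close> \<open>j \<le> c\<close> by auto
    then have "j \<le> k0 c x" unfolding k0_def using Max_ge fin by blast
    with \<open>k0 c x < j\<close> show False by simp
  qed
qed

lemma wseq_nonneg:
  assumes "x \<in> policies c" "lam > 0" "d > 0"
  shows "j \<le> c \<Longrightarrow> wseq c lam d x j \<ge> 0"
proof (induction j)
  case 0 then show ?case by simp
next
  case (Suc j)
  then have "x (Suc j) \<ge> 0" using assms(1) unfolding policies_def by auto
  then show ?case using Suc assms by (auto intro!: divide_nonneg_pos mult_nonneg_nonneg)
qed

lemma wseq_k0: "wseq c lam d x (k0 c x) = 1"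
  using k0_props(2)[of c x] by (cases "k0 c x") auto

lemma steady_unique:
  assumes st: "steady_state c lam d x p" and pol: "x \<in> policies c" and lam: "lam > 0" and d: "d > 0"
  shows "p = (\<lambda>j. if k0 c x \<le> j \<and> j \<le> c then wseq c lam d x j / (\<Sum>i=k0 c x..c. wseq c lam d x i) else 0)"
proof -
  define k where "k = k0 c x"
  define w where "w = wseq c lam d x"
  have eq: "\<And>j. j \<in> {1..c} \<Longrightarrow> p j * lam * x j = p (j - 1) * real (c - j + 1) / d"
    and zero: "\<And>j. j > c \<Longrightarrow> p j = 0" and sum1: "(\<Sum>j\<le>c. p j) = 1"
    using st unfolding steady_state_def by auto
  have kc: "k \<le> c" unfolding k_def by (rule k0_props)
  have below: "p (k - Suc n) = 0" if "n < k" for n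
    using that
  proof (induction n)
    case 0
    then have "x k = 0" using k0_props(2)[of c x] unfolding k_def by auto
    with eq[of k] 0 kc have "p (k - 1) * real (c - k + 1) / d = 0" by auto
    then show ?case using d by simp
  next
    case (Suc n)
    define j where "j = k - Suc n"
    have j1: "j \<in> {1..c}" using Suc.prems kc unfolding j_def by auto
    have "p j = 0" using Suc unfolding j_def by simp
    with eq[OF j1] have "p (j - 1) * real (c - j + 1) / d = 0" by simp
    then have "p (j - 1) = 0" using d j1 by simp
    moreover have "j - 1 = k - Suc (Suc n)" unfolding j_def by simp
    ultimately show ?case by simp
  qed
  have below': "p j = 0" if "j < k" for j
    using below[of "k - Suc j"] that by (simp add: Suc_diff_Suc)
  have above: "p (k + n) = p k * w (k + n)" if "k + n \<le> c" for n
    using that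
  proof (induction n)
    case 0 then show ?case unfolding w_def k_def by (simp add: wseq_k0)
  next
    case (Suc n)
    have xne: "x (Suc (k + n)) \<noteq> 0" using k0_props(3)[of c x "Suc (k+n)"] Suc.prems unfolding k_def by auto
    have e: "p (Suc (k+n)) * lam * x (Suc (k+n)) = p (k + n) * real (c - (k+n)) / d"
      using eq[of "Suc (k+n)"] Suc.prems by (simp add: Suc_diff_Suc)
    have "p (Suc (k+n)) = p (k + n) * real (c - (k+n)) / (d * lam * x (Suc (k+n)))"
      using e xne lam d by (simp add: field_simps)
    also have "\<dots> = p k * w (Suc (k + n))"
      using Suc xne unfolding w_def by simp
    finally show ?case by simp
  qed
  have above': "p j = p k * w j" if "k \<le> j" "j \<le> c" for j
    using above[of "j - k"] that by simp
  have "(\<Sum>j\<le>c. p j) = (\<Sum>j=k..c. p j)"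
    using below' by (intro sum.mono_neutral_right) auto
  also have "\<dots> = (\<Sum>j=k..c. p k * w j)"
    by (rule sum.cong) (auto intro: above')
  also have "\<dots> = p k * (\<Sum>j=k..c. w j)"
    by (simp add: sum_distrib_left)
  finally have pkS: "p k * (\<Sum>j=k..c. w j) = 1" using sum1 by simp
  have S0: "(\<Sum>j=k..c. w j) \<noteq> 0" using pkS by auto
  have pk: "p k = 1 / (\<Sum>j=k..c. w j)" using pkS S0 by (simp add: field_simps)
  show ?thesis
  proof
    fix j
    show "p j = (if k0 c x \<le> j \<and> j \<le> c then wseq c lam d x j / (\<Sum>i=k0 c x..c. wseq c lam d x i) else 0)"
    proof (cases "k \<le> j \<and> j \<le> c")
      case True
      then show ?thesis using above'[of j] pk unfolding k_def[symmetric] w_def[symmetric] by simp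
    next
      case False
      then show ?thesis using below'[of j] zero[of j] unfolding k_def[symmetric] w_def[symmetric] by auto
    qed
  qed
qed

lemma steady_exists:
  assumes pol: "x \<in> policies c" and lam: "lam > 0" and d: "d > 0"
  shows "steady_state c lam d x (\<lambda>j. if k0 c x \<le> j \<and> j \<le> c then wseq c lam d x j / (\<Sum>i=k0 c x..c. wseq c lam d x i) else 0)"
proof -
  define k where "k = k0 c x"
  define w where "w = wseq c lam d x"
  define S where "S = (\<Sum>i=k..c. w i)"
  define P where "P = (\<lambda>j. if k \<le> j \<and> j \<le> c then w j / S else 0)"
  have kc: "k \<le> c" unfolding k_def by (rule k0_props)
  have wn: "\<And>j. j \<le> c \<Longrightarrow> w j \<ge> 0" unfolding w_def using wseq_nonneg[OF pol lam d] by blast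
  have wk: "w k = 1" unfolding w_def k_def by (rule wseq_k0)
  have "S \<ge> w k" unfolding S_def
    using kc wn by (intro member_le_sum) auto
  then have Spos: "S > 0" using wk by simp
  have nonneg: "\<forall>j\<le>c. 0 \<le> P j" using wn Spos unfolding P_def by auto
  have zero: "\<forall>j>c. P j = 0" unfolding P_def by auto
  have "(\<Sum>j\<le>c. P j) = (\<Sum>j=k..c. P j)"
    unfolding P_def by (intro sum.mono_neutral_right) auto
  also have "\<dots> = (\<Sum>j=k..c. w j / S)" unfolding P_def by (rule sum.cong) auto
  also have "\<dots> = (\<Sum>j=k..c. w j) / S" by (simp add: sum_divide_distrib)
  also have "\<dots> = 1" using Spos unfolding S_def by simp
  finally have sum1: "(\<Sum>j\<le>c. P j) = 1" .
  have eq: "P j * lam * x j = P (j - 1) * real (c - j + 1) / d" if j: "j \<in> {1..c}" for j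
  proof (cases "j \<le> k")
    case True
    then have "P (j - 1) = 0" unfolding P_def using j by auto
    moreover have "P j * lam * x j = 0"
    proof (cases "j = k")
      case True
      then have "x k = 0" using k0_props(2)[of c x] j unfolding k_def by auto
      then show ?thesis using True by simp
    next
      case False
      then show ?thesis using \<open>j \<le> k\<close> unfolding P_def by auto
    qed
    ultimately show ?thesis by simp
  next
    case False
    then have xne: "x j \<noteq> 0" using k0_props(3)[of c x j] j unfolding k_def by auto
    obtain i where i: "j = Suc i" using j by (cases j) auto
    have wj: "w j = w i * real (c - i) / (d * lam * x j)" unfolding w_def i using xne i by simp
    have Pj: "P j = w j / S" and Pi: "P (j - 1) = w i / S" unfolding P_def using False j i by auto
    have ci: "real (c - j + 1) = real (c - i)" using i j by auto
    show ?thesis unfolding Pj Pi wj ci using xne lam d Spos by (simp add: field_simps)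
  qed
  show ?thesis
    unfolding steady_state_def P_def[symmetric, unfolded S_def w_def k_def]
    using nonneg zero sum1 eq unfolding P_def S_def w_def k_def by blast
qed

lemma stat_dist_steady:
  assumes pol: "x \<in> policies c" and lam: "lam > 0" and d: "d > 0"
  shows "steady_state c lam d x (stat_dist c lam d x)"
proof -
  have "stat_dist c lam d x = (\<lambda>j. if k0 c x \<le> j \<and> j \<le> c then wseq c lam d x j / (\<Sum>i=k0 c x..c. wseq c lam d x i) else 0)"
    unfolding stat_dist_def
    by (rule the_equality[where P="steady_state c lam d x"], rule steady_exists[OF assms], rule steady_unique[OF _ assms])
  then show ?thesis using steady_exists[OF assms] by simp
qed



lemma sum_lt_gauss: "(\<Sum>k<n. real (n - k)) = real n * (real n + 1) / 2"
proof (induction n)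
  case 0 then show ?case by simp
next
  case (Suc n)
  have "(\<Sum>k<n. real (Suc n - k)) = (\<Sum>k<n. real (n - k) + 1)"
    by (rule sum.cong) (auto simp: Suc_diff_le)
  then have "(\<Sum>k<Suc n. real (Suc n - k)) = (\<Sum>k<n. real (n - k)) + real n + 1"
    by (simp add: sum.distrib)
  then show ?case using Suc by (simp add: field_simps)
qed

lemma gauss_bound: "(\<Sum>k\<le>c. real (n - k)) \<le> real n * (real n + 1) / 2"
proof -
  have "(\<Sum>k\<le>c. real (n - k)) = (\<Sum>k\<in>{..c}\<inter>{..<n}. real (n - k))"
    by (intro sum.mono_neutral_right) auto
  also have "\<dots> \<le> (\<Sum>k<n. real (n - k))"
    by (intro sum_mono2) auto
  also have "\<dots> = real n * (real n + 1) / 2" by (rule sum_lt_gauss)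
  finally show ?thesis .
qed

lemma core_ineq:
  fixes m v K :: real and n :: nat
  assumes m: "m \<ge> 0" and v: "v \<ge> 0" and K: "K \<ge> 1" and nK: "real n \<le> K" and Kn: "K < real n + 1"
    and mb: "m \<ge> real n - v * real n * (real n + 1) / 2"
  shows "2 * m + K^2 * v \<ge> K"
proof (cases "v * K \<ge> 1")
  case True
  have "K^2 * v = K * (v * K)" by (simp add: power2_eq_square)
  also have "\<dots> \<ge> K" using True K by (simp add: mult_le_cancel_left1)
  finally show ?thesis using m by linarith
next
  case False
  define t where "t = v * K"
  have t0: "t \<ge> 0" "t < 1" using False v K unfolding t_def by auto
  have "n \<noteq> 0" using K Kn by (cases "n = 0") auto
  then have n1: "real n \<ge> 1" by simp
  have "2 * real n - K \<ge> 0" using Kn n1 by linarith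
  then have a: "K * (2 * real n - K) \<ge> 0" using K by simp
  have b: "2 * real n * K - real n * (real n + 1) \<ge> 0"
  proof -
    have "real n * (real n + 1) \<le> real n * (2 * K)" using n1 nK by (intro mult_left_mono) auto
    then show ?thesis by (simp add: algebra_simps)
  qed
  have key: "K * (2 * real n + v * K^2 - v * real n * (real n + 1) - K)
      = (1 - t) * (K * (2 * real n - K)) + t * (2 * real n * K - real n * (real n + 1))"
    unfolding t_def by (simp add: algebra_simps power2_eq_square)
  have "(1 - t) * (K * (2 * real n - K)) + t * (2 * real n * K - real n * (real n + 1)) \<ge> 0"
  proof -
    have "(1 - t) * (K * (2 * real n - K)) \<ge> 0" using t0 a by simp
    moreover have "t * (2 * real n * K - real n * (real n + 1)) \<ge> 0" using t0 b by simp
    ultimately show ?thesis by linarith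
  qed
  then have "K * (2 * real n + v * K^2 - v * real n * (real n + 1) - K) \<ge> 0" using key by simp
  then have "2 * real n + v * K^2 - v * real n * (real n + 1) - K \<ge> 0"
    using K by (simp add: zero_le_mult_iff)
  then show ?thesis using mb by (simp add: algebra_simps, linarith)
qed

lemma sum_atMost_split:
  fixes c :: nat and f :: "nat \<Rightarrow> real"
  shows "(\<Sum>j\<le>c. f j) = f 0 + (\<Sum>j=1..c. f j)"
proof -
  have "{..c} = insert 0 {1..c}" by (auto simp: not_le less_one)
  then show ?thesis by simp
qed

lemma sum_shift1:
  fixes n :: nat and f :: "nat \<Rightarrow> real"
  shows "(\<Sum>j=1..n. f (j - 1)) = (\<Sum>k<n. f k)"
  by (induction n) auto

lemma sqrt_div_eq: assumes "c > 0" "e \<ge> 0" shows "sqrt (e / c) = sqrt (c * e) / c"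
proof -
  have "sqrt (c * e) = sqrt (c^2 * (e / c))"
    by (rule arg_cong[where f=sqrt]) (use assms in \<open>simp add: power2_eq_square field_simps\<close>)
  also have "\<dots> = c * sqrt (e / c)" using assms by (subst real_sqrt_mult) simp
  finally show ?thesis using assms by simp
qed

lemma loss_bound:
  fixes c :: nat and lam d xstar R r :: real and g :: "real \<Rightarrow> real"
  assumes lam: "lam > 0" and d: "d > 0"
    and xstar_def: "xstar = real c / (lam * d)"
    and xstar_pos: "0 < xstar"
    and g0: "g 0 = 0"
    and r: "0 < r" and rR: "r < R"
    and bound: "\<forall>x\<in>{0..1}. g x \<le> min (R * x + g xstar - R * xstar) (r * x + g xstar - r * xstar)"
    and c_ge: "real c \<ge> 1 / (R - r)"
    and pol: "x \<in> policies c" and st: "steady_state c lam d x p"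
  shows "lam * g xstar - (\<Sum>j=1..c. p j * lam * g (x j))
           \<ge> lam * min 1 (r / 2) * xstar * sqrt ((R - r) / real c)"
proof -
  define \<delta> where "\<delta> = R - r"
  define X where "X = xstar"
  have \<delta>: "\<delta> > 0" using rR unfolding \<delta>_def by simp
  have eq: "\<And>j. j \<in> {1..c} \<Longrightarrow> p j * lam * x j = p (j - 1) * real (c - j + 1) / d"
    and nonneg: "\<And>j. j \<le> c \<Longrightarrow> 0 \<le> p j" and sum1: "(\<Sum>j\<le>c. p j) = 1"
    using st unfolding steady_state_def by auto
  have xpol: "\<And>j. j \<in> {1..c} \<Longrightarrow> 0 \<le> x j \<and> x j \<le> 1" using pol unfolding policies_def by auto
  have cd1: "real c * \<delta> \<ge> 1" using c_ge \<delta> unfolding \<delta>_def[symmetric] by (simp add: field_simps)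
  then have cpos: "real c > 0" using \<delta> by (cases "c = 0") auto
  have Xc: "X = real c / (lam * d)" unfolding X_def xstar_def ..
  have Xpos: "X > 0" using xstar_pos unfolding X_def .
  define y where "y j = (if j = 0 then 0 else x j)" for j
  define G where "G j = (if j = 0 then 0 else g (x j))" for j
  define b where "b j = max 0 (X - y j)" for j
  have pw: "g X - g z \<ge> r * (X - z) + \<delta> * max 0 (X - z)" if z: "z \<in> {0..1}" for z
  proof -
    have h1: "g z \<le> R * z + g X - R * X" and h2: "g z \<le> r * z + g X - r * X"
      using bound z unfolding X_def by auto
    show ?thesis
    proof (cases "z \<le> X")
      case True
      then have "max 0 (X - z) = X - z" by simp
      then show ?thesis using h1 unfolding \<delta>_def by (simp add: algebra_simps)
    next
      case False
      then show ?thesis using h2 by (simp add: algebra_simps)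
    qed
  qed
  have pwj: "g X - G j \<ge> r * (X - y j) + \<delta> * b j" if "j \<le> c" for j
  proof (cases "j = 0")
    case True
    then show ?thesis using pw[of 0] g0 unfolding G_def y_def b_def by simp
  next
    case False
    then have "j \<in> {1..c}" using that by auto
    then show ?thesis using pw[of "x j"] xpol[of j] False unfolding G_def y_def b_def by simp
  qed
  have SG: "(\<Sum>j\<le>c. p j * G j) = (\<Sum>j=1..c. p j * g (x j))"
    unfolding sum_atMost_split[of "\<lambda>j. p j * G j"] by (simp add: G_def)
  have L1: "lam * g X - (\<Sum>j=1..c. p j * lam * g (x j)) = lam * (\<Sum>j\<le>c. p j * (g X - G j))"
  proof -
    have "(\<Sum>j\<le>c. p j * (g X - G j)) = g X * (\<Sum>j\<le>c. p j) - (\<Sum>j\<le>c. p j * G j)"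
      by (simp add: algebra_simps sum_subtractf sum_distrib_left)
    also have "\<dots> = g X - (\<Sum>j=1..c. p j * g (x j))" using sum1 SG by simp
    finally have f: "(\<Sum>j\<le>c. p j * (g X - G j)) = g X - (\<Sum>j=1..c. p j * g (x j))" .
    have "(\<Sum>j=1..c. p j * lam * g (x j)) = lam * (\<Sum>j=1..c. p j * g (x j))"
      by (simp add: sum_distrib_left mult.commute mult.left_commute)
    then show ?thesis unfolding f by (simp add: right_diff_distrib)
  qed
  define A1 where "A1 = (\<Sum>j\<le>c. p j * (X - y j))"
  define V where "V = (\<Sum>j\<le>c. p j * b j)"
  have L2: "(\<Sum>j\<le>c. p j * (g X - G j)) \<ge> r * A1 + \<delta> * V"
  proof -
    have "(\<Sum>j\<le>c. p j * (g X - G j)) \<ge> (\<Sum>j\<le>c. p j * (r * (X - y j) + \<delta> * b j))"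
      using pwj nonneg by (intro sum_mono mult_left_mono) auto
    also have "(\<Sum>j\<le>c. p j * (r * (X - y j) + \<delta> * b j)) = r * A1 + \<delta> * V"
      unfolding A1_def V_def by (simp add: distrib_left sum.distrib sum_distrib_left mult.left_commute)
    finally show ?thesis .
  qed
  define m where "m = (\<Sum>j\<le>c. real j * p j)"
  have m0: "m \<ge> 0" unfolding m_def using nonneg by (intro sum_nonneg) auto
  have A1: "A1 = X * m / real c"
  proof -
    have "(\<Sum>j\<le>c. p j * y j) = (\<Sum>j=1..c. p j * x j)"
      unfolding sum_atMost_split[of "\<lambda>j. p j * y j"] by (simp add: y_def)
    also have "\<dots> = (\<Sum>j=1..c. p (j - 1) * real (c - (j - 1)) / (d * lam))"
    proof (rule sum.cong)
      fix j assume j: "j \<in> {1..c}"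
      then have "c - j + 1 = c - (j - 1)" by auto
      then show "p j * x j = p (j - 1) * real (c - (j - 1)) / (d * lam)"
        using eq[OF j] lam d by (simp add: field_simps)
    qed simp
    also have "\<dots> = (\<Sum>k<c. p k * real (c - k) / (d * lam))"
      by (rule sum_shift1)
    also have "\<dots> = (\<Sum>k\<le>c. p k * real (c - k) / (d * lam))"
    proof -
      have "{..c} = insert c {..<c}" by auto
      then show ?thesis by simp
    qed
    also have "\<dots> = (\<Sum>k\<le>c. (p k * real c - real k * p k) / (d * lam))"
      by (rule sum.cong) (auto simp: of_nat_diff algebra_simps)
    also have "\<dots> = (real c - m) / (d * lam)"
      unfolding m_def using sum1
      by (simp add: sum_divide_distrib[symmetric] sum_subtractf sum_distrib_right[symmetric])
    finally have Sy: "(\<Sum>j\<le>c. p j * y j) = (real c - m) / (d * lam)" .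
    have "A1 = X * (\<Sum>j\<le>c. p j) - (\<Sum>j\<le>c. p j * y j)"
      unfolding A1_def by (simp add: algebra_simps sum_subtractf sum_distrib_left)
    also have "\<dots> = X - (real c - m) / (d * lam)" using sum1 Sy by simp
    also have "\<dots> = X * m / real c" unfolding Xc using cpos lam d by (simp add: field_simps)
    finally show ?thesis .
  qed
  have bnn: "\<And>j. b j \<ge> 0" unfolding b_def by simp
  have partial: "(\<Sum>j\<le>k. p j * b j) \<ge> X * p k" if "k \<le> c" for k
    using that
  proof (induction k)
    case 0 then show ?case using Xpos unfolding b_def y_def by simp
  next
    case (Suc k)
    have k1: "Suc k \<in> {1..c}" using Suc.prems by auto
    have e: "p (Suc k) * x (Suc k) = p k * real (c - k) / (d * lam)"
    proof -
      have "c - Suc k + 1 = c - k" using Suc.prems by auto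
      then show ?thesis using eq[OF k1] lam d by (simp add: field_simps)
    qed
    have "p k * real (c - k) / (d * lam) \<le> p k * real c / (d * lam)"
      using nonneg[of k] Suc.prems lam d by (intro divide_right_mono mult_left_mono) auto
    also have "\<dots> = X * p k" unfolding Xc by (simp add: field_simps)
    finally have e2: "p (Suc k) * x (Suc k) \<le> X * p k" using e by simp
    have "p (Suc k) * b (Suc k) \<ge> p (Suc k) * (X - x (Suc k))"
      using nonneg[of "Suc k"] Suc.prems unfolding b_def y_def by (intro mult_left_mono) auto
    then have "p (Suc k) * b (Suc k) \<ge> X * p (Suc k) - X * p k" using e2 by (simp add: algebra_simps)
    then show ?case using Suc by simp
  qed
  have Vk: "V \<ge> X * p k" if "k \<le> c" for k
  proof -
    have "(\<Sum>j\<le>k. p j * b j) \<le> V" unfolding V_def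
      using that nonneg bnn by (intro sum_mono2) (auto intro: mult_nonneg_nonneg)
    then show ?thesis using partial[OF that] by simp
  qed
  define v where "v = V / X"
  have V: "V = X * v" unfolding v_def using Xpos by simp
  have pv: "p k \<le> v" if "k \<le> c" for k
    using Vk[OF that] Xpos unfolding v_def by (simp add: field_simps)
  have v0: "v \<ge> 0" using pv[of 0] nonneg[of 0] by simp
  define K where "K = sqrt (real c * \<delta>)"
  have K1: "K \<ge> 1" unfolding K_def using cd1 by simp
  have K2: "K^2 = real c * \<delta>" unfolding K_def using cd1 by simp
  define n where "n = nat \<lfloor>K\<rfloor>"
  have nK_eq: "real n = real_of_int \<lfloor>K\<rfloor>" unfolding n_def using K1 by simp
  have nK: "real n \<le> K" and Kn: "K < real n + 1" unfolding nK_eq by linarith+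
  have mb: "m \<ge> real n - v * real n * (real n + 1) / 2"
  proof -
    have "real k * p k \<ge> real n * p k - real (n - k) * v" if "k \<le> c" for k
    proof (cases "n \<le> k")
      case True
      then show ?thesis using nonneg[OF that] by (simp add: mult_right_mono)
    next
      case False
      then have "real (n - k) = real n - real k" by (simp add: of_nat_diff)
      moreover have "real (n - k) * p k \<le> real (n - k) * v" using pv[OF that] by (intro mult_left_mono) auto
      ultimately show ?thesis by (simp add: algebra_simps)
    qed
    then have "m \<ge> (\<Sum>k\<le>c. real n * p k - real (n - k) * v)"
      unfolding m_def by (intro sum_mono) auto
    also have "(\<Sum>k\<le>c. real n * p k - real (n - k) * v) = real n - v * (\<Sum>k\<le>c. real (n - k))"
      using sum1 by (simp add: sum_subtractf sum_distrib_left[symmetric] sum_distrib_right[symmetric] mult.commute)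
    finally have "m \<ge> real n - v * (\<Sum>k\<le>c. real (n - k))" .
    moreover have "v * (\<Sum>k\<le>c. real (n - k)) \<le> v * (real n * (real n + 1) / 2)"
      using v0 gauss_bound by (intro mult_left_mono) auto
    ultimately show ?thesis by simp
  qed
  have core: "2 * m + K^2 * v \<ge> K" by (rule core_ineq[OF m0 v0 K1 nK Kn mb])
  define \<rho> where "\<rho> = min 1 (r / 2)"
  have \<rho>: "\<rho> \<ge> 0" "\<rho> \<le> 1" "2 * \<rho> \<le> r" using r unfolding \<rho>_def by auto
  have "r * m + real c * \<delta> * v \<ge> \<rho> * (2 * m + K^2 * v)"
  proof -
    have "r * m \<ge> (2 * \<rho>) * m" using \<rho> m0 by (intro mult_right_mono) auto
    moreover have "real c * \<delta> * v \<ge> \<rho> * (real c * \<delta> * v)"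
      using \<rho> v0 cd1 \<delta> by (intro mult_left_le_one_le mult_nonneg_nonneg) auto
    ultimately show ?thesis unfolding K2 by (simp add: algebra_simps)
  qed
  also have "\<rho> * (2 * m + K^2 * v) \<ge> \<rho> * K" using core \<rho> by (intro mult_left_mono) auto
  finally have "r * m + real c * \<delta> * v \<ge> \<rho> * K" by linarith
  then have "(r * m + real c * \<delta> * v) / real c \<ge> \<rho> * K / real c"
    using cpos by (intro divide_right_mono) auto
  then have fin1: "r * m / real c + \<delta> * v \<ge> \<rho> * sqrt (\<delta> / real c)"
    unfolding sqrt_div_eq[OF cpos less_imp_le[OF \<delta>]] K_def[symmetric] using cpos
    by (simp add: field_simps)
  have "r * A1 + \<delta> * V = X * (r * m / real c + \<delta> * v)" unfolding A1 V by (simp add: algebra_simps)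
  also have "\<dots> \<ge> X * (\<rho> * sqrt (\<delta> / real c))" using fin1 Xpos by (intro mult_left_mono) auto
  finally have "r * A1 + \<delta> * V \<ge> X * (\<rho> * sqrt (\<delta> / real c))" .
  with L2 have "(\<Sum>j\<le>c. p j * (g X - G j)) \<ge> X * (\<rho> * sqrt (\<delta> / real c))" by linarith
  then have "lam * (\<Sum>j\<le>c. p j * (g X - G j)) \<ge> lam * (X * (\<rho> * sqrt (\<delta> / real c)))"
    using lam by (intro mult_left_mono) auto
  then show ?thesis unfolding L1[unfolded X_def] using L1 unfolding X_def \<rho>_def \<delta>_def
    by (simp add: algebra_simps)
qed


theorem lemma5:
  fixes c :: nat and lam d xstar R r :: real and g :: "real \<Rightarrow> real"
  assumes lam: "lam > 0" and d: "d > 0"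
    and xstar_def: "xstar = real c / (lam * d)"
    and xstar_pos: "0 < xstar" and xstar_lt: "xstar < 1"
    and concave: "concave_on {0..1} g"
    and mono: "mono_on {0..1} g"
    and g0: "g 0 = 0"
    and r: "0 < r" and rR: "r < R"
    and bound: "\<forall>x\<in>{0..1}. g x \<le> min (R * x + g xstar - R * xstar) (r * x + g xstar - r * xstar)"
    and c_ge: "real c \<ge> 1 / (R - r)"
  shows "lam * g xstar - (SUP x\<in>policies c. avg_reward c lam d g x)
           \<ge> lam * min 1 (r / 2) * xstar * sqrt ((R - r) / real c)"
proof -
  define B where "B = lam * min 1 (r / 2) * xstar * sqrt ((R - r) / real c)"
  have pne: "policies c \<noteq> {}"
  proof -
    have "(\<lambda>_. 0) \<in> policies c" unfolding policies_def by simp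
    then show ?thesis by blast
  qed
  have "(SUP x\<in>policies c. avg_reward c lam d g x) \<le> lam * g xstar - B"
  proof (rule cSUP_least[OF pne])
    fix x assume pol: "x \<in> policies c"
    have st: "steady_state c lam d x (stat_dist c lam d x)"
      by (rule stat_dist_steady[OF pol lam d])
    have "lam * g xstar - (\<Sum>j=1..c. stat_dist c lam d x j * lam * g (x j)) \<ge> B"
      unfolding B_def
      by (rule loss_bound[OF lam d xstar_def xstar_pos g0 r rR bound c_ge pol st])
    then show "avg_reward c lam d g x \<le> lam * g xstar - B"
      unfolding avg_reward_def by linarith
  qed
  then show ?thesis unfolding B_def by linarith
qed

end
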